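(* Let $\boldsymbol{\lambda}\in\Delta_N$, $\boldsymbol{\nu}=(\nu_1,\dots,\nu_N)\in\mathcal{P}_1(\mathbb{R})^N$ and $\nu\in\mathcal{P}_1(\mathbb{R})$. The following are equivalent: (1) $\nu\in\mathrm{Med}_{\boldsymbol{\lambda}}(\boldsymbol{\nu})$; (2) $F_\nu(x)\in\mathrm{M}_{\boldsymbol{\lambda}}(F_{\nu_1}(x),\dots,F_{\nu_N}(x))$ for all $x\in\mathbb{R}$; (3) $Q_\nu(t)\in\mathrm{M}_{\boldsymbol{\lambda}}(Q_{\nu_1}(t),\dots,Q_{\nu_N}(t))$ for all $t\in(0,1)$. In particular, if there is no subset $I\subset\{1,\dots,N\}$ with $\sum_{i\in I}\lambda_i=\frac12$, there exists a unique Wasserstein median.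
   Context: $\Delta_N$ is the unit simplex of $\mathbb{R}^N$; $\mathcal{P}_1(\mathbb{R})$ is the set of Borel probability measures on $\mathbb{R}$ with finite first moment, with distance $W_1$. $\mathrm{Med}_{\boldsymbol{\lambda}}(\boldsymbol{\nu})$ is the set of minimizers over $\mu\in\mathcal{P}_1(\mathbb{R})$ of $\sum_i\lambda_iW_1(\nu_i,\mu)$ (Wasserstein medians). $F_\nu(x)=\nu((-\infty,x])$ is the cdf and $Q_\nu(t)=\inf\{x:F_\nu(x)\ge t\}$ the quantile function. For $\mathbf{x}=(x_1,\dots,x_N)\in\mathbb{R}^N$, $\mathrm{M}_{\boldsymbol{\lambda}}(\mathbf{x})=\operatorname{argmin}_{y\in\mathbb{R}}\sum_{i=1}^N\lambda_i|y-x_i|$ (the set of weighted medians). *)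

theory Defs
  imports "HOL-Probability.Probability"
begin

definition unit_simplex :: "nat \<Rightarrow> (nat \<Rightarrow> real) \<Rightarrow> bool" where
  "unit_simplex N lam \<longleftrightarrow> (\<forall>i<N. 0 \<le> lam i) \<and> (\<Sum>i<N. lam i) = 1"

definition P1 :: "real measure \<Rightarrow> bool" where
  "P1 M \<longleftrightarrow> prob_space M \<and> sets M = sets borel \<and> integrable M (\<lambda>x. \<bar>x\<bar>)"

definition couplings :: "real measure \<Rightarrow> real measure \<Rightarrow> (real \<times> real) measure set" where
  "couplings mu nu = {pi. prob_space pi \<and> sets pi = sets (borel \<Otimes>\<^sub>M borel)
      \<and> distr pi borel fst = mu \<and> distr pi borel snd = nu}"

definition W1 :: "real measure \<Rightarrow> real measure \<Rightarrow> real" where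
  "W1 mu nu = enn2real (\<Sqinter>pi\<in>couplings mu nu. \<integral>\<^sup>+ p. ennreal \<bar>fst p - snd p\<bar> \<partial>pi)"

definition WMed :: "nat \<Rightarrow> (nat \<Rightarrow> real) \<Rightarrow> (nat \<Rightarrow> real measure) \<Rightarrow> real measure set" where
  "WMed N lam nus = {mu. P1 mu \<and> (\<forall>mu'. P1 mu' \<longrightarrow>
      (\<Sum>i<N. lam i * W1 (nus i) mu) \<le> (\<Sum>i<N. lam i * W1 (nus i) mu'))}"

definition quantile :: "real measure \<Rightarrow> real \<Rightarrow> real" where
  "quantile M t = Inf {x. t \<le> cdf M x}"

definition wmedian :: "nat \<Rightarrow> (nat \<Rightarrow> real) \<Rightarrow> (nat \<Rightarrow> real) \<Rightarrow> real set" where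
  "wmedian N lam x = {y. \<forall>z. (\<Sum>i<N. lam i * \<bar>y - x i\<bar>) \<le> (\<Sum>i<N. lam i * \<bar>z - x i\<bar>)}"

end

theory Submission
  imports Defs
begin

lemma quantile_galois:
  assumes M: "real_distribution M" and t: "0 < t" "t < 1"
  shows "quantile M t \<le> x \<longleftrightarrow> t \<le> cdf M x"
proof -
  interpret real_distribution M by fact
  let ?S = "{x. t \<le> cdf M x}"
  have "eventually (\<lambda>x. cdf M x > t) at_top"
    using cdf_lim_at_top_prob t by (simp add: order_tendstoD(1))
  then obtain y0 where "y0 \<in> ?S" by (metis (mono_tags) eventually_at_top_linorder less_imp_le mem_Collect_eq order_refl)
  hence ne: "?S \<noteq> {}" by auto
  have "eventually (\<lambda>x. cdf M x < t) at_bot"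
    using cdf_lim_at_bot t by (simp add: order_tendstoD(2))
  then obtain b where b: "\<And>x. x \<le> b \<Longrightarrow> cdf M x < t" by (auto simp: eventually_at_bot_linorder)
  have bdd: "bdd_below ?S"
    by (rule bdd_belowI[of _ b]) (metis b linorder_not_le mem_Collect_eq order_less_imp_le not_le)
  let ?a = "Inf ?S"
  have up: "t \<le> cdf M ?a"
  proof (rule tendsto_lowerbound[of "cdf M" "cdf M ?a" "at_right ?a"])
    show "(cdf M \<longlongrightarrow> cdf M ?a) (at_right ?a)"
      using cdf_is_right_cont by (simp add: continuous_within)
    show "\<forall>\<^sub>F y in at_right ?a. t \<le> cdf M y"
      unfolding eventually_at_right_less
    proof -
      have "\<forall>y>?a. t \<le> cdf M y"
      proof (intro allI impI)
        fix y assume "?a < y"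
        then obtain s where "s \<in> ?S" "s < y" using ne by (meson cInf_lessD)
        thus "t \<le> cdf M y" using cdf_nondecreasing[of s y] by auto
      qed
      thus "\<forall>\<^sub>F y in at_right ?a. t \<le> cdf M y"
        by (simp add: eventually_at_right_field) (meson gt_ex)
    qed
  qed simp
  show ?thesis
  proof
    assume "quantile M t \<le> x"
    hence "?a \<le> x" by (simp add: quantile_def)
    thus "t \<le> cdf M x" using up cdf_nondecreasing by (meson order_trans)
  next
    assume "t \<le> cdf M x"
    thus "quantile M t \<le> x" unfolding quantile_def using bdd by (simp add: cInf_lower)
  qed
qed


definition UU :: "real measure" where "UU = restrict_space lborel {0<..<1}"

lemma space_UU[simp]: "space UU = {0<..<1}"
  by (simp add: UU_def space_restrict_space)

lemma prob_UU: "prob_space UU"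
  unfolding UU_def
  by (auto simp add: emeasure_restrict_space space_restrict_space intro!: prob_spaceI)

lemma sets_UU: "sets UU = sets (restrict_space borel {0<..<1})"
  unfolding UU_def by (rule sets_restrict_space_cong) simp

lemma measurable_UU_iff: "measurable UU N = measurable (restrict_space borel {0<..<1}) N"
  by (rule measurable_cong_sets[OF sets_UU refl])

lemma distr_quantile: "real_distribution M \<Longrightarrow> distr UU borel (quantile M) = M"
proof -
  assume "real_distribution M"
  then interpret cdf_distribution M unfolding cdf_distribution_def .
  show ?thesis using distr_I_eq_M unfolding UU_def quantile_def[abs_def] .
qed

lemma quantile_mono:
  assumes M: "real_distribution M" and "0 < s" "s \<le> t" "t < 1"
  shows "quantile M s \<le> quantile M t"
  using quantile_galois[OF M] assms by (meson order_le_less_trans order_less_le_trans order_refl order_trans)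

lemma quantile_mono_on: "real_distribution M \<Longrightarrow> mono_on {0<..<1} (quantile M)"
  unfolding mono_on_def using quantile_mono by auto

lemma quantile_left_cont:
  assumes M: "real_distribution M" and t: "0 < t" "t < 1"
  shows "(quantile M \<longlongrightarrow> quantile M t) (at_left t)"
proof (rule order_tendstoI)
  fix a assume "a > quantile M t"
  have "eventually (\<lambda>s. 0 < s \<and> s < t) (at_left t)"
    using t by (auto simp: eventually_at_left_field intro: exI[of _ 0])
  thus "eventually (\<lambda>s. quantile M s < a) (at_left t)"
  proof eventually_elim
    case (elim s)
    hence "quantile M s \<le> quantile M t" using quantile_mono[OF M, of s t] t by auto
    thus ?case using \<open>a > quantile M t\<close> by auto
  qed
next
  fix a assume a: "a < quantile M t"
  hence c: "cdf M a < t" using quantile_galois[OF M t, of a] by auto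
  have "eventually (\<lambda>s. max (cdf M a) 0 < s \<and> s < t) (at_left t)"
    using t c by (auto simp: eventually_at_left_field intro: exI[of _ "max (cdf M a) 0"])
  thus "eventually (\<lambda>s. a < quantile M s) (at_left t)"
  proof eventually_elim
    case (elim s)
    hence "0 < s" "s < 1" using t by auto
    thus ?case using quantile_galois[OF M \<open>0<s\<close> \<open>s<1\<close>, of a] elim by auto
  qed
qed

lemma distr_mono_galois:
  assumes mono: "mono_on {0<..<1} q"
    and lc: "\<And>t. 0 < t \<Longrightarrow> t < 1 \<Longrightarrow> (q \<longlongrightarrow> q t) (at_left t)"
  shows "real_distribution (distr UU borel q)"
    and "\<And>t x. 0 < t \<Longrightarrow> t < 1 \<Longrightarrow> t \<le> cdf (distr UU borel q) x \<longleftrightarrow> q t \<le> x"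
proof -
  interpret prob_space UU by (rule prob_UU)
  have qm: "q \<in> borel_measurable UU"
    unfolding measurable_UU_iff by (rule borel_measurable_mono_on_fnc[OF mono])
  show "real_distribution (distr UU borel q)" using qm by simp
  fix t x :: real assume t: "0 < t" "t < 1"
  have S: "{u \<in> {0<..<1}. q u \<le> x} \<in> sets lborel"
  proof -
    have "q -` {..x} \<inter> space UU \<in> sets UU" by (rule measurable_sets[OF qm]) simp
    hence "q -` {..x} \<inter> space UU \<in> sets (restrict_space borel {0<..<1})" by (simp only: sets_UU)
    hence "q -` {..x} \<inter> space UU \<in> sets lborel"
      by (subst (asm) sets_restrict_space_iff) auto
    moreover have "q -` {..x} \<inter> space UU = {u \<in> {0<..<1}. q u \<le> x}" by auto
    ultimately show ?thesis by simp
  qed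
  have Sf: "{u \<in> {0<..<1}. q u \<le> x} \<in> fmeasurable lborel"
  proof (rule fmeasurableI2[of "{0<..<1}"])
    show "{0<..<1::real} \<in> fmeasurable lborel" by (auto simp: fmeasurable_def)
  qed (use S in auto)
  have cdfeq: "cdf (distr UU borel q) x = measure lborel {u \<in> {0<..<1}. q u \<le> x}"
  proof -
    have "cdf (distr UU borel q) x = measure UU (q -` {..x} \<inter> space UU)"
      unfolding cdf_def using qm by (simp add: measure_distr)
    also have "q -` {..x} \<inter> space UU = {u \<in> {0<..<1}. q u \<le> x}" by auto
    also have "measure UU \<dots> = measure lborel {u \<in> {0<..<1}. q u \<le> x}"
      unfolding UU_def by (rule measure_restrict_space) auto
    finally show ?thesis .
  qed
  show "t \<le> cdf (distr UU borel q) x \<longleftrightarrow> q t \<le> x"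
  proof
    assume qt: "q t \<le> x"
    have sub: "{0<..t} \<subseteq> {u \<in> {0<..<1}. q u \<le> x}"
    proof
      fix u assume u: "u \<in> {0<..t}"
      hence "q u \<le> q t" using mono t by (auto simp: mono_on_def)
      thus "u \<in> {u \<in> {0<..<1}. q u \<le> x}" using u t qt by auto
    qed
    have "t = measure lborel {0<..t}" using t by simp
    also have "\<dots> \<le> measure lborel {u \<in> {0<..<1}. q u \<le> x}"
      using Sf by (intro measure_mono_fmeasurable[OF sub]) auto
    finally show "t \<le> cdf (distr UU borel q) x" using cdfeq by simp
  next
    assume tc: "t \<le> cdf (distr UU borel q) x"
    show "q t \<le> x"
    proof (rule ccontr)
      assume "\<not> q t \<le> x"
      hence "x < q t" by simp
      from order_tendstoD(1)[OF lc[OF t] this]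
      obtain b where b: "b < t" "\<And>s. b < s \<Longrightarrow> s < t \<Longrightarrow> x < q s"
        by (auto simp: eventually_at_left_field)
      define c where "c = max b 0"
      have c: "0 \<le> c" "c < t" using b t by (auto simp: c_def)
      have sub: "{u \<in> {0<..<1}. q u \<le> x} \<subseteq> {0<..c}"
      proof (intro subsetI)
        fix u assume "u \<in> {u \<in> {0<..<1}. q u \<le> x}"
        hence u: "u \<in> {0<..<1}" "q u \<le> x" by auto
        have "u \<le> c"
        proof (rule ccontr)
          assume "\<not> u \<le> c"
          hence uc: "c < u" by simp
          show False
          proof (cases "u < t")
            case True thus False using b(2)[of u] uc u by (auto simp: c_def)
          next
            case False
            hence "q t \<le> q u" using mono u t by (auto simp: mono_on_def)
            thus False using u \<open>x < q t\<close> by auto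
          qed
        qed
        thus "u \<in> {0<..c}" using u by auto
      qed
      have "measure lborel {u \<in> {0<..<1}. q u \<le> x} \<le> measure lborel {0<..c}"
        by (rule measure_mono_fmeasurable[OF sub]) (use S c in \<open>auto simp: fmeasurable_def\<close>)
      also have "\<dots> = c" using c by simp
      finally show False using tc cdfeq c by simp
    qed
  qed
qed


lemma abs_as_integral: "ennreal \<bar>a - b\<bar> = (\<integral>\<^sup>+ t. indicator {min a b..<max a b} t \<partial>lborel)"
  by (simp add: max_def min_def)

lemma ind_abs: "(indicator {min a b..<max a b} (t::real) :: ennreal)
   = ennreal \<bar>indicator {..t} a - indicator {..t} b :: real\<bar>"
  by (cases "a \<le> t"; cases "b \<le> t") (auto simp: indicator_def min_def max_def)

lemma cdf_lower_bound:
  assumes mu: "real_distribution mu" and nu: "real_distribution nu" and cp: "cp \<in> couplings mu nu"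
  shows "(\<integral>\<^sup>+ t. ennreal \<bar>cdf mu t - cdf nu t\<bar> \<partial>lborel) \<le> (\<integral>\<^sup>+ p. ennreal \<bar>fst p - snd p\<bar> \<partial>cp)"
proof -
  from cp have pps: "prob_space cp" and spi: "sets cp = sets (borel \<Otimes>\<^sub>M borel)"
    and d1: "distr cp borel fst = mu" and d2: "distr cp borel snd = nu"
    by (auto simp: couplings_def)
  interpret P: prob_space cp by fact
  interpret PS: pair_sigma_finite cp lborel
    by (simp add: pair_sigma_finite_def lborel.sigma_finite_measure_axioms P.sigma_finite_measure_axioms)
  have mpi: "measurable cp = measurable (borel \<Otimes>\<^sub>M borel)" by (rule ext, rule measurable_cong_sets[OF spi refl])
  have mpl: "measurable (cp \<Otimes>\<^sub>M lborel) = measurable ((borel \<Otimes>\<^sub>M borel) \<Otimes>\<^sub>M borel)"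
    by (rule ext, rule measurable_cong_sets[OF sets_pair_measure_cong[OF spi sets_lborel] refl])
  have meas: "(\<lambda>(p, t). indicator {min (fst p) (snd p)..<max (fst p) (snd p)} t :: ennreal)
      \<in> borel_measurable (cp \<Otimes>\<^sub>M lborel)"
  proof -
    have "(\<lambda>(p, t). indicator {min (fst p) (snd p)..<max (fst p) (snd p)} t :: ennreal)
       = (\<lambda>x. if min (fst (fst x)) (snd (fst x)) \<le> snd x \<and> snd x < max (fst (fst x)) (snd (fst x)) then 1 else 0)"
      by (auto simp: indicator_def fun_eq_iff)
    also have "\<dots> \<in> borel_measurable (cp \<Otimes>\<^sub>M lborel)" unfolding mpl by measurable
    finally show ?thesis .
  qed
  have "(\<integral>\<^sup>+ p. ennreal \<bar>fst p - snd p\<bar> \<partial>cp)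
      = (\<integral>\<^sup>+ p. (\<integral>\<^sup>+ t. indicator {min (fst p) (snd p)..<max (fst p) (snd p)} t \<partial>lborel) \<partial>cp)"
    by (simp only: abs_as_integral)
  also have "\<dots> = (\<integral>\<^sup>+ t. (\<integral>\<^sup>+ p. indicator {min (fst p) (snd p)..<max (fst p) (snd p)} t \<partial>cp) \<partial>lborel)"
    using PS.Fubini'[of "\<lambda>p t. indicator {min (fst p) (snd p)..<max (fst p) (snd p)} t :: ennreal"] meas
    by simp
  finally have eq: "(\<integral>\<^sup>+ p. ennreal \<bar>fst p - snd p\<bar> \<partial>cp) = \<dots>" .
  have pw: "ennreal \<bar>cdf mu t - cdf nu t\<bar>
      \<le> (\<integral>\<^sup>+ p. indicator {min (fst p) (snd p)..<max (fst p) (snd p)} t \<partial>cp)" for t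
  proof -
    let ?f = "\<lambda>p. indicator {..t} (fst p) :: real" and ?g = "\<lambda>p. indicator {..t} (snd p) :: real"
    have fm: "?f \<in> borel_measurable cp" "?g \<in> borel_measurable cp" unfolding mpi by measurable
    have fi: "integrable cp ?f" "integrable cp ?g"
      using fm by (auto intro!: P.integrable_const_bound[where B=1] simp: indicator_def)
    have di: "integrable cp (\<lambda>p. \<bar>?f p - ?g p\<bar>)" using fi by auto
    have "(\<integral>\<^sup>+ p. indicator {min (fst p) (snd p)..<max (fst p) (snd p)} t \<partial>cp)
        = (\<integral>\<^sup>+ p. ennreal \<bar>?f p - ?g p\<bar> \<partial>cp)"
      by (simp only: ind_abs)
    also have "\<dots> = ennreal (\<integral> p. \<bar>?f p - ?g p\<bar> \<partial>cp)"
      using di by (intro nn_integral_eq_integral) auto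
    finally have e1: "(\<integral>\<^sup>+ p. indicator {min (fst p) (snd p)..<max (fst p) (snd p)} t \<partial>cp)
        = ennreal (\<integral> p. \<bar>?f p - ?g p\<bar> \<partial>cp)" .
    have c1: "(\<integral> p. ?f p \<partial>cp) = cdf mu t"
    proof -
      have "(\<integral> p. ?f p \<partial>cp) = (\<integral> x. indicator {..t} x \<partial>distr cp borel fst)"
        by (subst integral_distr) (auto simp: mpi)
      also have "\<dots> = cdf mu t" using d1 mu by (simp add: cdf_def real_distribution.space_eq_univ)
      finally show ?thesis .
    qed
    have c2: "(\<integral> p. ?g p \<partial>cp) = cdf nu t"
    proof -
      have "(\<integral> p. ?g p \<partial>cp) = (\<integral> x. indicator {..t} x \<partial>distr cp borel snd)"
        by (subst integral_distr) (auto simp: mpi)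
      also have "\<dots> = cdf nu t" using d2 nu by (simp add: cdf_def real_distribution.space_eq_univ)
      finally show ?thesis .
    qed
    have "\<bar>cdf mu t - cdf nu t\<bar> = \<bar>\<integral> p. ?f p - ?g p \<partial>cp\<bar>"
      using c1 c2 fi by (simp add: integral_diff)
    also have "\<dots> \<le> (\<integral> p. \<bar>?f p - ?g p\<bar> \<partial>cp)" by (rule integral_abs_bound)
    finally show ?thesis unfolding e1 by (rule ennreal_leI)
  qed
  show ?thesis unfolding eq by (intro nn_integral_mono pw)
qed


lemma rd_cdf_mono: "real_distribution M \<Longrightarrow> x \<le> y \<Longrightarrow> cdf M x \<le> cdf M y"
  using real_distribution.finite_borel_measure_M finite_borel_measure.cdf_nondecreasing by blast
lemma rd_cdf_nonneg: "real_distribution M \<Longrightarrow> 0 \<le> cdf M x"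
  using real_distribution.finite_borel_measure_M finite_borel_measure.cdf_nonneg by blast
lemma rd_cdf_le1: "real_distribution M \<Longrightarrow> cdf M x \<le> 1"
  using real_distribution.cdf_bounded_prob by blast
lemma rd_cdf_rc: "real_distribution M \<Longrightarrow> continuous (at_right a) (cdf M)"
  using real_distribution.finite_borel_measure_M finite_borel_measure.cdf_is_right_cont by blast

lemma quantile_measurable: "real_distribution M \<Longrightarrow> quantile M \<in> borel_measurable UU"
  unfolding measurable_UU_iff by (rule borel_measurable_mono_on_fnc[OF quantile_mono_on])

lemma cdf_measurable[measurable]: "real_distribution M \<Longrightarrow> cdf M \<in> borel_measurable borel"
  by (rule borel_measurable_mono) (simp add: mono_def rd_cdf_mono)

lemma emeasure_Ioc_cap:
  assumes "0 \<le> m" "m \<le> M" "M \<le> (1::real)"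
  shows "emeasure lborel ({m<..M} \<inter> {0<..<1}) = ennreal (M - m)"
proof (rule antisym)
  have "emeasure lborel ({m<..M} \<inter> {0<..<1}) \<le> emeasure lborel {m<..M}"
    by (rule emeasure_mono) auto
  thus "emeasure lborel ({m<..M} \<inter> {0<..<1}) \<le> ennreal (M - m)" using assms by simp
  have "emeasure lborel {m<..<M} \<le> emeasure lborel ({m<..M} \<inter> {0<..<1})"
    by (rule emeasure_mono) (use assms in auto)
  thus "ennreal (M - m) \<le> emeasure lborel ({m<..M} \<inter> {0<..<1})" using assms by simp
qed

lemma area_formula:
  assumes mu: "real_distribution mu" and nu: "real_distribution nu"
  shows "(\<integral>\<^sup>+ u. ennreal \<bar>quantile mu u - quantile nu u\<bar> \<partial>UU)
       = (\<integral>\<^sup>+ t. ennreal \<bar>cdf mu t - cdf nu t\<bar> \<partial>lborel)"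
proof -
  interpret U: prob_space UU by (rule prob_UU)
  interpret PS: pair_sigma_finite UU lborel
    by (simp add: pair_sigma_finite_def lborel.sigma_finite_measure_axioms U.sigma_finite_measure_axioms)
  let ?F = "cdf mu" and ?G = "cdf nu"
  let ?h = "\<lambda>u t. indicator {min (?F t) (?G t)<..max (?F t) (?G t)} u :: ennreal"
  have mpl: "measurable (UU \<Otimes>\<^sub>M lborel) = measurable (restrict_space borel {0<..<1} \<Otimes>\<^sub>M borel)"
    by (rule ext, rule measurable_cong_sets[OF sets_pair_measure_cong[OF sets_UU sets_lborel] refl])
  have idm[measurable]: "(\<lambda>x. x) \<in> borel_measurable (restrict_space borel {0<..<1::real})"
    by (rule measurable_restrict_space1[OF measurable_ident_sets]) simp
  have Fm[measurable]: "?F \<in> borel_measurable borel" "?G \<in> borel_measurable borel"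
    using mu nu by (auto intro: cdf_measurable)
  have meas: "case_prod ?h \<in> borel_measurable (UU \<Otimes>\<^sub>M lborel)"
  proof -
    have "case_prod ?h = (\<lambda>x. if min (?F (snd x)) (?G (snd x)) < fst x \<and> fst x \<le> max (?F (snd x)) (?G (snd x)) then 1 else 0)"
      by (auto simp: indicator_def fun_eq_iff)
    also have "\<dots> \<in> borel_measurable (UU \<Otimes>\<^sub>M lborel)" unfolding mpl by measurable
    finally show ?thesis .
  qed
  have "(\<integral>\<^sup>+ u. ennreal \<bar>quantile mu u - quantile nu u\<bar> \<partial>UU)
      = (\<integral>\<^sup>+ u. (\<integral>\<^sup>+ t. ?h u t \<partial>lborel) \<partial>UU)"
  proof (rule nn_integral_cong)
    fix u assume "u \<in> space UU"
    hence u: "0 < u" "u < 1" by auto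
    have "ennreal \<bar>quantile mu u - quantile nu u\<bar>
       = (\<integral>\<^sup>+ t. indicator {min (quantile mu u) (quantile nu u)..<max (quantile mu u) (quantile nu u)} t \<partial>lborel)"
      by (rule abs_as_integral)
    also have "\<dots> = (\<integral>\<^sup>+ t. ?h u t \<partial>lborel)"
    proof (rule nn_integral_cong)
      fix t
      have g1: "quantile mu u \<le> t \<longleftrightarrow> u \<le> ?F t" by (rule quantile_galois[OF mu u])
      have g2: "quantile nu u \<le> t \<longleftrightarrow> u \<le> ?G t" by (rule quantile_galois[OF nu u])
      show "indicator {min (quantile mu u) (quantile nu u)..<max (quantile mu u) (quantile nu u)} t = ?h u t"
        using g1 g2 by (auto simp: indicator_def min_def max_def)
    qed
    finally show "ennreal \<bar>quantile mu u - quantile nu u\<bar> = (\<integral>\<^sup>+ t. ?h u t \<partial>lborel)" .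
  qed
  also have "\<dots> = (\<integral>\<^sup>+ t. (\<integral>\<^sup>+ u. ?h u t \<partial>UU) \<partial>lborel)"
    using PS.Fubini'[OF meas] by simp
  also have "\<dots> = (\<integral>\<^sup>+ t. ennreal \<bar>?F t - ?G t\<bar> \<partial>lborel)"
  proof (rule nn_integral_cong)
    fix t
    let ?m = "min (?F t) (?G t)" and ?M = "max (?F t) (?G t)"
    have b: "0 \<le> ?m" "?m \<le> ?M" "?M \<le> 1"
      using mu nu by (auto simp: rd_cdf_nonneg rd_cdf_le1)
    have S: "{?m<..?M} \<inter> {0<..<1} \<in> sets UU"
      unfolding sets_UU by (subst sets_restrict_space_iff) auto
    have "(\<integral>\<^sup>+ u. ?h u t \<partial>UU) = (\<integral>\<^sup>+ u. indicator ({?m<..?M} \<inter> {0<..<1}) u \<partial>UU)"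
      by (rule nn_integral_cong) (auto simp: indicator_def)
    also have "\<dots> = emeasure UU ({?m<..?M} \<inter> {0<..<1})" using S by simp
    also have "\<dots> = emeasure lborel ({?m<..?M} \<inter> {0<..<1})"
      unfolding UU_def by (rule emeasure_restrict_space) auto
    also have "\<dots> = ennreal (?M - ?m)" by (rule emeasure_Ioc_cap[OF b])
    also have "?M - ?m = \<bar>?F t - ?G t\<bar>" by (simp add: max_def min_def)
    finally show "(\<integral>\<^sup>+ u. ?h u t \<partial>UU) = ennreal \<bar>?F t - ?G t\<bar>" .
  qed
  finally show ?thesis .
qed

lemma W1_formula:
  assumes mu: "real_distribution mu" and nu: "real_distribution nu"
  shows "(\<Sqinter>cp\<in>couplings mu nu. \<integral>\<^sup>+ p. ennreal \<bar>fst p - snd p\<bar> \<partial>cp)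
       = (\<integral>\<^sup>+ t. ennreal \<bar>cdf mu t - cdf nu t\<bar> \<partial>lborel)"
proof (rule antisym)
  interpret U: prob_space UU by (rule prob_UU)
  let ?q = "\<lambda>u. (quantile mu u, quantile nu u)"
  let ?c = "distr UU (borel \<Otimes>\<^sub>M borel) ?q"
  have qm: "?q \<in> measurable UU (borel \<Otimes>\<^sub>M borel)"
    using quantile_measurable[OF mu] quantile_measurable[OF nu] by (intro measurable_Pair) auto
  have "?c \<in> couplings mu nu"
    unfolding couplings_def
  proof (intro CollectI conjI)
    show "prob_space ?c" using qm by (rule U.prob_space_distr)
    show "sets ?c = sets (borel \<Otimes>\<^sub>M borel)" by simp
    show "distr ?c borel fst = mu"
      using qm by (subst distr_distr) (auto simp: comp_def distr_quantile[OF mu])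
    show "distr ?c borel snd = nu"
      using qm by (subst distr_distr) (auto simp: comp_def distr_quantile[OF nu])
  qed
  hence "(\<Sqinter>cp\<in>couplings mu nu. \<integral>\<^sup>+ p. ennreal \<bar>fst p - snd p\<bar> \<partial>cp)
      \<le> (\<integral>\<^sup>+ p. ennreal \<bar>fst p - snd p\<bar> \<partial>?c)" by (rule INF_lower)
  also have "\<dots> = (\<integral>\<^sup>+ u. ennreal \<bar>quantile mu u - quantile nu u\<bar> \<partial>UU)"
    using qm by (subst nn_integral_distr) auto
  also have "\<dots> = (\<integral>\<^sup>+ t. ennreal \<bar>cdf mu t - cdf nu t\<bar> \<partial>lborel)"
    by (rule area_formula[OF mu nu])
  finally show "(\<Sqinter>cp\<in>couplings mu nu. \<integral>\<^sup>+ p. ennreal \<bar>fst p - snd p\<bar> \<partial>cp) \<le> \<dots>" .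
next
  show "(\<integral>\<^sup>+ t. ennreal \<bar>cdf mu t - cdf nu t\<bar> \<partial>lborel)
     \<le> (\<Sqinter>cp\<in>couplings mu nu. \<integral>\<^sup>+ p. ennreal \<bar>fst p - snd p\<bar> \<partial>cp)"
    by (rule INF_greatest) (rule cdf_lower_bound[OF mu nu])
qed


lemma P1_rd: "P1 M \<Longrightarrow> real_distribution M"
  unfolding P1_def real_distribution_def real_distribution_axioms_def by auto

lemma P1_moment:
  assumes "P1 M" shows "(\<integral>\<^sup>+ u. ennreal \<bar>quantile M u\<bar> \<partial>UU) < \<infinity>"
proof -
  have rd: "real_distribution M" using assms by (rule P1_rd)
  have "(\<integral>\<^sup>+ u. ennreal \<bar>quantile M u\<bar> \<partial>UU) = (\<integral>\<^sup>+ x. ennreal \<bar>x\<bar> \<partial>distr UU borel (quantile M))"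
    using quantile_measurable[OF rd] by (subst nn_integral_distr) auto
  also have "\<dots> = (\<integral>\<^sup>+ x. ennreal (norm x) \<partial>M)" by (simp add: distr_quantile[OF rd])
  also have "\<dots> < \<infinity>" using assms unfolding P1_def integrable_iff_bounded by simp
  finally show ?thesis .
qed

lemma P1_W1_fin:
  assumes mu: "P1 mu" and nu: "P1 nu"
  shows "(\<integral>\<^sup>+ u. ennreal \<bar>quantile mu u - quantile nu u\<bar> \<partial>UU) < \<infinity>"
proof -
  have "(\<integral>\<^sup>+ u. ennreal \<bar>quantile mu u - quantile nu u\<bar> \<partial>UU)
     \<le> (\<integral>\<^sup>+ u. ennreal \<bar>quantile mu u\<bar> + ennreal \<bar>quantile nu u\<bar> \<partial>UU)"
    by (intro nn_integral_mono) (simp add: ennreal_plus[symmetric] del: ennreal_plus)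
  also have "\<dots> = (\<integral>\<^sup>+ u. ennreal \<bar>quantile mu u\<bar> \<partial>UU) + (\<integral>\<^sup>+ u. ennreal \<bar>quantile nu u\<bar> \<partial>UU)"
    using quantile_measurable[OF P1_rd[OF mu]] quantile_measurable[OF P1_rd[OF nu]]
    by (intro nn_integral_add) auto
  also have "\<dots> < \<infinity>" using P1_moment[OF mu] P1_moment[OF nu] by (simp add: ennreal_add_less_top)
  finally show ?thesis .
qed

lemma W1_cdf:
  assumes mu: "P1 mu" and nu: "P1 nu"
  shows "integrable lborel (\<lambda>t. \<bar>cdf mu t - cdf nu t\<bar>)"
    and "W1 mu nu = (\<integral> t. \<bar>cdf mu t - cdf nu t\<bar> \<partial>lborel)"
proof -
  have rd: "real_distribution mu" "real_distribution nu" using mu nu by (auto intro: P1_rd)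
  have m: "(\<lambda>t. \<bar>cdf mu t - cdf nu t\<bar>) \<in> borel_measurable lborel"
    using rd by (auto intro!: borel_measurable_abs borel_measurable_diff cdf_measurable simp: measurable_lborel1)
  have fin: "(\<integral>\<^sup>+ t. ennreal \<bar>cdf mu t - cdf nu t\<bar> \<partial>lborel) < \<infinity>"
    using P1_W1_fin[OF mu nu] area_formula[OF rd] by simp
  show "integrable lborel (\<lambda>t. \<bar>cdf mu t - cdf nu t\<bar>)"
    using m fin by (intro integrableI_bounded) auto
  show "W1 mu nu = (\<integral> t. \<bar>cdf mu t - cdf nu t\<bar> \<partial>lborel)"
    unfolding W1_def W1_formula[OF rd] using m by (subst integral_eq_nn_integral) auto
qed

lemma W1_quantile:
  assumes mu: "P1 mu" and nu: "P1 nu"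
  shows "integrable UU (\<lambda>u. \<bar>quantile mu u - quantile nu u\<bar>)"
    and "W1 mu nu = (\<integral> u. \<bar>quantile mu u - quantile nu u\<bar> \<partial>UU)"
proof -
  have rd: "real_distribution mu" "real_distribution nu" using mu nu by (auto intro: P1_rd)
  have m: "(\<lambda>u. \<bar>quantile mu u - quantile nu u\<bar>) \<in> borel_measurable UU"
    using quantile_measurable[OF rd(1)] quantile_measurable[OF rd(2)] by auto
  show "integrable UU (\<lambda>u. \<bar>quantile mu u - quantile nu u\<bar>)"
    using m P1_W1_fin[OF mu nu] by (intro integrableI_bounded) auto
  show "W1 mu nu = (\<integral> u. \<bar>quantile mu u - quantile nu u\<bar> \<partial>UU)"
    unfolding W1_def W1_formula[OF rd] area_formula[OF rd, symmetric] using m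
    by (subst integral_eq_nn_integral) auto
qed


definition Ifam :: "nat \<Rightarrow> (nat \<Rightarrow> real) \<Rightarrow> nat set set" where
  "Ifam N lam = {I. I \<subseteq> {..<N} \<and> 1/2 \<le> (\<Sum>i\<in>I. lam i)}"

definition lowmed :: "nat \<Rightarrow> (nat \<Rightarrow> real) \<Rightarrow> (nat \<Rightarrow> real) \<Rightarrow> real" where
  "lowmed N lam v = Min ((\<lambda>I. Max (v ` I)) ` Ifam N lam)"

definition upmed :: "nat \<Rightarrow> (nat \<Rightarrow> real) \<Rightarrow> (nat \<Rightarrow> real) \<Rightarrow> real" where
  "upmed N lam v = Max ((\<lambda>I. Min (v ` I)) ` Ifam N lam)"

lemma Ifam_finite: "finite (Ifam N lam)"
  unfolding Ifam_def by (rule finite_subset[of _ "Pow {..<N}"]) auto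

lemma Ifam_full: "unit_simplex N lam \<Longrightarrow> {..<N} \<in> Ifam N lam"
  unfolding Ifam_def unit_simplex_def by auto

lemma Ifam_ne: "unit_simplex N lam \<Longrightarrow> Ifam N lam \<noteq> {}"
  using Ifam_full by blast

lemma Ifam_mem: "I \<in> Ifam N lam \<Longrightarrow> finite I \<and> I \<noteq> {} \<and> I \<subseteq> {..<N}"
  unfolding Ifam_def by (auto intro: finite_subset)

lemma lowmed_le_iff: "unit_simplex N lam \<Longrightarrow> u \<le> lowmed N lam v \<longleftrightarrow> (\<forall>I\<in>Ifam N lam. \<exists>i\<in>I. u \<le> v i)"
  unfolding lowmed_def using Ifam_finite Ifam_ne Ifam_mem
  by (auto simp: Min_ge_iff Max_ge_iff)

lemma upmed_le_iff: "unit_simplex N lam \<Longrightarrow> upmed N lam v \<le> x \<longleftrightarrow> (\<forall>I\<in>Ifam N lam. \<exists>i\<in>I. v i \<le> x)"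
  unfolding upmed_def using Ifam_finite Ifam_ne Ifam_mem
  by (auto simp: Max_le_iff Min_le_iff)

lemma lowmed_attained: assumes "unit_simplex N lam"
  obtains I where "I \<in> Ifam N lam" "lowmed N lam v = Max (v ` I)"
proof -
  have "lowmed N lam v \<in> (\<lambda>I. Max (v ` I)) ` Ifam N lam"
    unfolding lowmed_def using Ifam_finite Ifam_ne[OF assms] by (intro Min_in) auto
  thus ?thesis using that by auto
qed

lemma lowmed_in: assumes "unit_simplex N lam" shows "\<exists>i<N. lowmed N lam v = v i"
proof -
  obtain I where I: "I \<in> Ifam N lam" "lowmed N lam v = Max (v ` I)" using lowmed_attained[OF assms] .
  have "Max (v ` I) \<in> v ` I" using Ifam_mem[OF I(1)] by (intro Max_in) auto
  then obtain i where "i \<in> I" "Max (v ` I) = v i" by auto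
  thus ?thesis using I Ifam_mem[OF I(1)] by auto
qed

lemma upmed_in: assumes "unit_simplex N lam" shows "\<exists>i<N. upmed N lam v = v i"
proof -
  have "upmed N lam v \<in> (\<lambda>I. Min (v ` I)) ` Ifam N lam"
    unfolding upmed_def using Ifam_finite Ifam_ne[OF assms] by (intro Max_in) auto
  then obtain I where I: "I \<in> Ifam N lam" "upmed N lam v = Min (v ` I)" by auto
  have "Min (v ` I) \<in> v ` I" using Ifam_mem[OF I(1)] by (intro Min_in) auto
  then obtain i where "i \<in> I" "Min (v ` I) = v i" by auto
  thus ?thesis using I Ifam_mem[OF I(1)] by auto
qed

lemma lowmed_mono: assumes "unit_simplex N lam" "\<And>i. i < N \<Longrightarrow> v i \<le> w i"
  shows "lowmed N lam v \<le> lowmed N lam w"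
  unfolding lowmed_le_iff[OF assms(1)]
proof
  fix I assume I: "I \<in> Ifam N lam"
  have "lowmed N lam v \<le> lowmed N lam v" by simp
  then obtain i where "i \<in> I" "lowmed N lam v \<le> v i" using I lowmed_le_iff[OF assms(1)] by blast
  thus "\<exists>i\<in>I. lowmed N lam v \<le> w i" using assms(2)[of i] Ifam_mem[OF I] by force
qed

lemma upmed_mono: assumes "unit_simplex N lam" "\<And>i. i < N \<Longrightarrow> v i \<le> w i"
  shows "upmed N lam v \<le> upmed N lam w"
  unfolding upmed_le_iff[OF assms(1)]
proof
  fix I assume I: "I \<in> Ifam N lam"
  have "upmed N lam w \<le> upmed N lam w" by simp
  then obtain i where "i \<in> I" "w i \<le> upmed N lam w" using I upmed_le_iff[OF assms(1)] by blast
  thus "\<exists>i\<in>I. v i \<le> upmed N lam w" using assms(2)[of i] Ifam_mem[OF I] by force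
qed

lemma tendsto_Max_fin:
  fixes f :: "'i \<Rightarrow> 'b \<Rightarrow> real"
  assumes "finite A" "A \<noteq> {}" "\<And>a. a \<in> A \<Longrightarrow> ((\<lambda>x. f a x) \<longlongrightarrow> l a) F"
  shows "((\<lambda>x. Max ((\<lambda>a. f a x) ` A)) \<longlongrightarrow> Max (l ` A)) F"
  using assms
proof (induction A rule: finite_ne_induct)
  case (singleton a) thus ?case by simp
next
  case (insert a A)
  have "((\<lambda>x. max (f a x) (Max ((\<lambda>a. f a x) ` A))) \<longlongrightarrow> max (l a) (Max (l ` A))) F"
    using insert by (intro tendsto_max) auto
  thus ?case using insert by simp
qed

lemma tendsto_Min_fin:
  fixes f :: "'i \<Rightarrow> 'b \<Rightarrow> real"
  assumes "finite A" "A \<noteq> {}" "\<And>a. a \<in> A \<Longrightarrow> ((\<lambda>x. f a x) \<longlongrightarrow> l a) F"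
  shows "((\<lambda>x. Min ((\<lambda>a. f a x) ` A)) \<longlongrightarrow> Min (l ` A)) F"
  using assms
proof (induction A rule: finite_ne_induct)
  case (singleton a) thus ?case by simp
next
  case (insert a A)
  have "((\<lambda>x. min (f a x) (Min ((\<lambda>a. f a x) ` A))) \<longlongrightarrow> min (l a) (Min (l ` A))) F"
    using insert by (intro tendsto_min) auto
  thus ?case using insert by simp
qed

lemma lowmed_tendsto:
  assumes "unit_simplex N lam" "\<And>i. i < N \<Longrightarrow> ((\<lambda>x. f i x) \<longlongrightarrow> l i) F"
  shows "((\<lambda>x. lowmed N lam (\<lambda>i. f i x)) \<longlongrightarrow> lowmed N lam l) F"
  unfolding lowmed_def image_image
  using Ifam_finite Ifam_ne[OF assms(1)]
proof (intro tendsto_Min_fin[where f="\<lambda>I x. Max ((\<lambda>i. f i x) ` I)" and l = "\<lambda>I. Max (l ` I)", simplified])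
  fix I assume I: "I \<in> Ifam N lam"
  show "((\<lambda>x. Max ((\<lambda>i. f i x) ` I)) \<longlongrightarrow> Max (l ` I)) F"
    using Ifam_mem[OF I] assms(2) by (intro tendsto_Max_fin) auto
qed auto

lemma upmed_tendsto:
  assumes "unit_simplex N lam" "\<And>i. i < N \<Longrightarrow> ((\<lambda>x. f i x) \<longlongrightarrow> l i) F"
  shows "((\<lambda>x. upmed N lam (\<lambda>i. f i x)) \<longlongrightarrow> upmed N lam l) F"
  unfolding upmed_def image_image
  using Ifam_finite Ifam_ne[OF assms(1)]
proof (intro tendsto_Max_fin[where f="\<lambda>I x. Min ((\<lambda>i. f i x) ` I)" and l = "\<lambda>I. Min (l ` I)", simplified])
  fix I assume I: "I \<in> Ifam N lam"
  show "((\<lambda>x. Min ((\<lambda>i. f i x) ` I)) \<longlongrightarrow> Min (l ` I)) F"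
    using Ifam_mem[OF I] assms(2) by (intro tendsto_Min_fin) auto
qed auto


lemma sum_pm:
  assumes "unit_simplex N lam"
  shows "(\<Sum>i<N. lam i * (if P i then 1 else -1)) = 2 * (\<Sum>i\<in>{i. i < N \<and> P i}. lam i) - 1"
proof -
  have "(\<Sum>i<N. lam i * (if P i then 1 else -1)) = (\<Sum>i<N. if P i then lam i else - lam i)"
    by (rule sum.cong) auto
  also have "\<dots> = (\<Sum>i\<in>{..<N} \<inter> {i. P i}. lam i) + (\<Sum>i\<in>{..<N} \<inter> - {i. P i}. - lam i)"
    by (rule sum.If_cases) simp
  also have "(\<Sum>i\<in>{..<N} \<inter> - {i. P i}. - lam i) = - (\<Sum>i\<in>{..<N} - {i. P i}. lam i)"
    by (simp add: sum_negf Diff_eq)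
  also have "(\<Sum>i\<in>{..<N} - {i. P i}. lam i) = 1 - (\<Sum>i\<in>{..<N} \<inter> {i. P i}. lam i)"
    using sum.Int_Diff[of "{..<N}" lam "{i. P i}"] assms by (simp add: unit_simplex_def)
  also have "{..<N} \<inter> {i. P i} = {i. i < N \<and> P i}" by auto
  finally show ?thesis by simp
qed

lemma sum_sub_mono:
  assumes "unit_simplex N lam" "A \<subseteq> B" "B \<subseteq> {..<N}"
  shows "(\<Sum>i\<in>A. lam i) \<le> (\<Sum>i\<in>B. lam i)"
  using assms by (intro sum_mono2) (auto simp: unit_simplex_def intro: finite_subset)

lemma lowmed_wmedian:
  assumes us: "unit_simplex N lam"
  shows "lowmed N lam v \<in> wmedian N lam v"
proof -
  define a where "a = lowmed N lam v"
  have lam0: "\<And>i. i < N \<Longrightarrow> 0 \<le> lam i" using us by (auto simp: unit_simplex_def)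
  obtain I0 where I0: "I0 \<in> Ifam N lam" "a = Max (v ` I0)" using lowmed_attained[OF us] a_def by metis
  let ?L = "{i. i < N \<and> v i \<le> a}" and ?S = "{i. i < N \<and> v i < a}"
  have "I0 \<subseteq> ?L" using I0 Ifam_mem[OF I0(1)] by auto
  hence L: "1/2 \<le> (\<Sum>i\<in>?L. lam i)"
  proof -
    have "(\<Sum>i\<in>I0. lam i) \<le> (\<Sum>i\<in>?L. lam i)" by (rule sum_sub_mono[OF us \<open>I0 \<subseteq> ?L\<close>]) auto
    moreover have "1/2 \<le> (\<Sum>i\<in>I0. lam i)" using I0(1) by (simp add: Ifam_def)
    ultimately show ?thesis by linarith
  qed
  have S: "(\<Sum>i\<in>?S. lam i) < 1/2"
  proof (rule ccontr)
    assume "\<not> ?thesis"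
    hence "?S \<in> Ifam N lam" by (auto simp: Ifam_def)
    moreover have "a \<le> lowmed N lam v" by (simp add: a_def)
    ultimately obtain i where "i \<in> ?S" "a \<le> v i" using lowmed_le_iff[OF us] by blast
    thus False by auto
  qed
  have "(\<Sum>i<N. lam i * \<bar>a - v i\<bar>) \<le> (\<Sum>i<N. lam i * \<bar>z - v i\<bar>)" for z
  proof (cases "a \<le> z")
    case True
    have "(\<Sum>i<N. lam i * \<bar>z - v i\<bar>) \<ge> (\<Sum>i<N. lam i * \<bar>a - v i\<bar> + (z - a) * (lam i * (if v i \<le> a then 1 else -1)))"
    proof (rule sum_mono)
      fix i assume "i \<in> {..<N}"
      hence l: "0 \<le> lam i" using lam0 by auto
      have "\<bar>a - v i\<bar> + (z - a) * (if v i \<le> a then 1 else -1) \<le> \<bar>z - v i\<bar>"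
        using True by (cases "v i \<le> a") auto
      from mult_left_mono[OF this l]
      show "lam i * \<bar>a - v i\<bar> + (z - a) * (lam i * (if v i \<le> a then 1 else -1)) \<le> lam i * \<bar>z - v i\<bar>"
        by (simp add: algebra_simps)
    qed
    also have "(\<Sum>i<N. lam i * \<bar>a - v i\<bar> + (z - a) * (lam i * (if v i \<le> a then 1 else -1)))
        = (\<Sum>i<N. lam i * \<bar>a - v i\<bar>) + (z - a) * (2 * (\<Sum>i\<in>?L. lam i) - 1)"
      by (simp add: sum.distrib sum_distrib_left[symmetric] sum_pm[OF us])
    moreover have "0 \<le> (z - a) * (2 * (\<Sum>i\<in>?L. lam i) - 1)" using True L by (intro mult_nonneg_nonneg) auto
    ultimately show ?thesis by linarith
  next
    case False
    have "(\<Sum>i<N. lam i * \<bar>z - v i\<bar>) \<ge> (\<Sum>i<N. lam i * \<bar>a - v i\<bar> - (a - z) * (lam i * (if v i < a then 1 else -1)))"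
    proof (rule sum_mono)
      fix i assume "i \<in> {..<N}"
      hence l: "0 \<le> lam i" using lam0 by auto
      have "\<bar>a - v i\<bar> - (a - z) * (if v i < a then 1 else -1) \<le> \<bar>z - v i\<bar>"
        using False by (cases "v i < a") auto
      from mult_left_mono[OF this l]
      show "lam i * \<bar>a - v i\<bar> - (a - z) * (lam i * (if v i < a then 1 else -1)) \<le> lam i * \<bar>z - v i\<bar>"
        by (simp add: algebra_simps)
    qed
    also have "(\<Sum>i<N. lam i * \<bar>a - v i\<bar> - (a - z) * (lam i * (if v i < a then 1 else -1)))
        = (\<Sum>i<N. lam i * \<bar>a - v i\<bar>) - (a - z) * (2 * (\<Sum>i\<in>?S. lam i) - 1)"
      by (simp add: sum_subtractf sum_distrib_left[symmetric] sum_pm[OF us])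
    moreover have "(a - z) * (2 * (\<Sum>i\<in>?S. lam i) - 1) \<le> 0" using False S by (intro mult_nonneg_nonpos) auto
    ultimately show ?thesis by linarith
  qed
  thus ?thesis by (simp add: wmedian_def a_def)
qed

lemma wmedian_unique_aux:
  assumes us: "unit_simplex N lam" and nohalf: "\<not> (\<exists>I\<subseteq>{..<N}. (\<Sum>i\<in>I. lam i) = 1/2)"
    and y1: "y1 \<in> wmedian N lam v" and y2: "y2 \<in> wmedian N lam v" and lt: "y1 < y2"
  shows False
proof -
  define g where "g z = (\<Sum>i<N. lam i * \<bar>z - v i\<bar>)" for z
  have lam0: "\<And>i. i < N \<Longrightarrow> 0 \<le> lam i" using us by (auto simp: unit_simplex_def)
  have m1: "\<And>z. g y1 \<le> g z" and m2: "\<And>z. g y2 \<le> g z" using y1 y2 by (auto simp: wmedian_def g_def)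
  have conv: "g d \<le> g y1" if d: "y1 \<le> d" "d \<le> y2" for d
  proof -
    have "(y2 - y1) * g d \<le> (\<Sum>i<N. lam i * ((y2 - d) * \<bar>y1 - v i\<bar> + (d - y1) * \<bar>y2 - v i\<bar>))"
      unfolding g_def sum_distrib_left
    proof (rule sum_mono)
      fix i assume "i \<in> {..<N}"
      hence l: "0 \<le> lam i" using lam0 by auto
      have e: "(y2 - y1) * (d - v i) = (y2 - d) * (y1 - v i) + (d - y1) * (y2 - v i)" by algebra
      have "(y2 - y1) * \<bar>d - v i\<bar> = \<bar>(y2 - y1) * (d - v i)\<bar>" using lt by (simp add: abs_mult)
      also have "\<dots> \<le> \<bar>(y2 - d) * (y1 - v i)\<bar> + \<bar>(d - y1) * (y2 - v i)\<bar>" unfolding e by (rule abs_triangle_ineq)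
      also have "\<dots> = (y2 - d) * \<bar>y1 - v i\<bar> + (d - y1) * \<bar>y2 - v i\<bar>" using d by (simp add: abs_mult)
      finally have "(y2 - y1) * \<bar>d - v i\<bar> \<le> (y2 - d) * \<bar>y1 - v i\<bar> + (d - y1) * \<bar>y2 - v i\<bar>" .
      from mult_left_mono[OF this l]
      show "(y2 - y1) * (lam i * \<bar>d - v i\<bar>) \<le> lam i * ((y2 - d) * \<bar>y1 - v i\<bar> + (d - y1) * \<bar>y2 - v i\<bar>)"
        by (simp add: algebra_simps)
    qed
    also have "\<dots> = (\<Sum>i<N. (y2 - d) * (lam i * \<bar>y1 - v i\<bar>) + (d - y1) * (lam i * \<bar>y2 - v i\<bar>))"
      by (rule sum.cong) (auto simp: algebra_simps)
    also have "\<dots> = (y2 - d) * g y1 + (d - y1) * g y2"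
      by (simp add: g_def sum.distrib sum_distrib_left)
    also have "g y2 = g y1" using m1[of y2] m2[of y1] by simp
    finally have "(y2 - y1) * g d \<le> (y2 - y1) * g y1" by (simp add: algebra_simps)
    thus ?thesis using lt by simp
  qed
  define D where "D = insert y2 (v ` {i. i < N \<and> y1 < v i \<and> v i < y2})"
  define d where "d = Min D"
  have Dfin: "finite D" "D \<noteq> {}" by (auto simp: D_def)
  have dD: "d \<in> D" using Dfin by (simp add: d_def)
  have d1: "y1 < d" using dD lt by (auto simp: D_def)
  have d2: "d \<le> y2" using Dfin by (simp add: d_def D_def)
  have sep: "v i \<le> y1 \<or> d \<le> v i" if "i < N" for i
  proof (cases "y1 < v i")
    case True
    show ?thesis
    proof (cases "v i < y2")
      case True
      hence "v i \<in> D" using \<open>y1 < v i\<close> \<open>i < N\<close> by (auto simp: D_def)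
      thus ?thesis using Dfin by (simp add: d_def)
    next
      case False thus ?thesis using d2 by auto
    qed
  qed auto
  have gd: "g d = g y1" using conv[of d] d1 d2 m1[of d] by simp
  let ?L = "{i. i < N \<and> v i \<le> y1}"
  have "g d = (\<Sum>i<N. lam i * \<bar>y1 - v i\<bar> + (d - y1) * (lam i * (if v i \<le> y1 then 1 else -1)))"
    unfolding g_def
  proof (rule sum.cong)
    fix i assume "i \<in> {..<N}"
    hence "v i \<le> y1 \<or> d \<le> v i" using sep by auto
    thus "lam i * \<bar>d - v i\<bar> = lam i * \<bar>y1 - v i\<bar> + (d - y1) * (lam i * (if v i \<le> y1 then 1 else -1))"
      using d1 by (auto simp: algebra_simps)
  qed simp
  also have "\<dots> = g y1 + (d - y1) * (2 * (\<Sum>i\<in>?L. lam i) - 1)"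
    by (simp add: g_def sum.distrib sum_distrib_left[symmetric] sum_pm[OF us])
  finally have "(d - y1) * (2 * (\<Sum>i\<in>?L. lam i) - 1) = 0" using gd by simp
  hence "(\<Sum>i\<in>?L. lam i) = 1/2" using d1 by simp
  moreover have "?L \<subseteq> {..<N}" by auto
  ultimately show False using nohalf by blast
qed

lemma wmedian_unique:
  assumes "unit_simplex N lam" "\<not> (\<exists>I\<subseteq>{..<N}. (\<Sum>i\<in>I. lam i) = 1/2)"
    "y1 \<in> wmedian N lam v" "y2 \<in> wmedian N lam v"
  shows "y1 = y2"
  using wmedian_unique_aux[OF assms(1,2,3,4)] wmedian_unique_aux[OF assms(1,2,4,3)]
  by (cases y1 y2 rule: linorder_cases) auto


lemma AE_right_cont_zero:
  fixes h :: "real \<Rightarrow> real"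
  assumes ae: "AE x in lborel. h x = 0" and c: "(h \<longlongrightarrow> h t) (at_right t)"
  shows "h t = 0"
proof (rule ccontr)
  assume "h t \<noteq> 0"
  from tendsto_imp_eventually_ne[OF c this]
  obtain b where b: "t < b" "\<And>y. t < y \<Longrightarrow> y < b \<Longrightarrow> h y \<noteq> 0"
    by (auto simp: eventually_at_right_field)
  from ae obtain N0 where N0: "{x \<in> space lborel. \<not> h x = 0} \<subseteq> N0" "emeasure lborel N0 = 0" "N0 \<in> sets lborel"
    by (rule AE_E)
  have "{t<..<b} \<subseteq> N0" using N0(1) b(2) by auto
  hence "emeasure lborel {t<..<b} \<le> emeasure lborel N0" using N0(3) by (rule emeasure_mono)
  thus False using N0(2) b(1) by simp
qed

lemma AE_left_cont_zero_UU:
  fixes h :: "real \<Rightarrow> real"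
  assumes ae: "AE x in UU. h x = 0" and c: "(h \<longlongrightarrow> h t) (at_left t)" and t: "0 < t" "t < 1"
  shows "h t = 0"
proof (rule ccontr)
  assume "h t \<noteq> 0"
  from tendsto_imp_eventually_ne[OF c this]
  obtain b where b: "b < t" "\<And>y. b < y \<Longrightarrow> y < t \<Longrightarrow> h y \<noteq> 0"
    by (auto simp: eventually_at_left_field)
  define c where "c = max b 0"
  have cc: "0 \<le> c" "c < t" using b t by (auto simp: c_def)
  from ae obtain N0 where N0: "{x \<in> space UU. \<not> h x = 0} \<subseteq> N0" "emeasure UU N0 = 0" "N0 \<in> sets UU"
    by (rule AE_E)
  have "{c<..<t} \<subseteq> N0" using N0(1) b(2) t cc by (auto simp: c_def)
  hence "emeasure UU {c<..<t} \<le> emeasure UU N0" using N0(3) by (rule emeasure_mono)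
  moreover have "emeasure UU {c<..<t} = emeasure lborel {c<..<t}"
    unfolding UU_def using cc t by (intro emeasure_restrict_space) auto
  ultimately show False using N0(2) cc by simp
qed

lemma eq_from_galois:
  fixes a b :: real
  assumes "0 \<le> a" "a \<le> 1" "0 \<le> b" "b \<le> 1" "\<And>t. 0 < t \<Longrightarrow> t < 1 \<Longrightarrow> t \<le> a \<longleftrightarrow> t \<le> b"
  shows "a = b"
proof (rule ccontr)
  assume "a \<noteq> b"
  then consider "a < b" | "b < a" by linarith
  thus False
  proof cases
    case 1 thus False using assms(5)[of "(a+b)/2"] assms(1-4) by auto
  next
    case 2 thus False using assms(5)[of "(a+b)/2"] assms(1-4) by auto
  qed
qed

lemma quantile_distr_q:
  assumes mono: "mono_on {0<..<1} q"
    and lc: "\<And>t. 0 < t \<Longrightarrow> t < 1 \<Longrightarrow> (q \<longlongrightarrow> q t) (at_left t)"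
    and t: "0 < t" "t < 1"
  shows "quantile (distr UU borel q) t = q t"
proof -
  have "{x. t \<le> cdf (distr UU borel q) x} = {q t..}"
    using distr_mono_galois(2)[OF mono lc t] by auto
  thus ?thesis unfolding quantile_def by simp
qed

context
  fixes N :: nat and lam :: "nat \<Rightarrow> real" and nus :: "nat \<Rightarrow> real measure"
  assumes us: "unit_simplex N lam" and P1s: "\<forall>i<N. P1 (nus i)"
begin

lemma rds: "i < N \<Longrightarrow> real_distribution (nus i)"
  using P1s P1_rd by blast

lemma int_Q: "i < N \<Longrightarrow> integrable UU (\<lambda>u. \<bar>quantile (nus i) u\<bar>)"
proof -
  assume i: "i < N"
  have "integrable (nus i) (\<lambda>x. \<bar>x\<bar>)" using P1s i by (auto simp: P1_def)
  hence "integrable (distr UU borel (quantile (nus i))) (\<lambda>x. \<bar>x\<bar>)" using distr_quantile[OF rds[OF i]] by simp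
  thus ?thesis using quantile_measurable[OF rds[OF i]] by (subst (asm) integrable_distr_eq) auto
qed

lemma P1_of_q:
  assumes mono: "mono_on {0<..<1} q"
    and lc: "\<And>t. 0 < t \<Longrightarrow> t < 1 \<Longrightarrow> (q \<longlongrightarrow> q t) (at_left t)"
    and inq: "\<And>u. 0 < u \<Longrightarrow> u < 1 \<Longrightarrow> \<exists>i<N. q u = quantile (nus i) u"
  shows "P1 (distr UU borel q)"
proof -
  have rd: "real_distribution (distr UU borel q)" by (rule distr_mono_galois(1)[OF mono lc])
  have qm: "q \<in> borel_measurable UU"
    unfolding measurable_UU_iff by (rule borel_measurable_mono_on_fnc[OF mono])
  have "integrable UU (\<lambda>u. \<Sum>i<N. \<bar>quantile (nus i) u\<bar>)" using int_Q by auto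
  moreover have "(\<lambda>u. \<bar>q u\<bar>) \<in> borel_measurable UU" using qm by auto
  moreover
    have "AE u in UU. norm \<bar>q u\<bar> \<le> norm (\<Sum>i<N. \<bar>quantile (nus i) u\<bar>)"
    proof (rule AE_I2)
      fix u assume "u \<in> space UU"
      then obtain j where j: "j < N" "q u = quantile (nus j) u" using inq by auto
      have "\<bar>q u\<bar> \<le> (\<Sum>i<N. \<bar>quantile (nus i) u\<bar>)"
        unfolding j(2) by (rule member_le_sum[of j "{..<N}" "\<lambda>i. \<bar>quantile (nus i) u\<bar>"]) (use j in auto)
      moreover have "0 \<le> (\<Sum>i<N. \<bar>quantile (nus i) u\<bar>)" by (rule sum_nonneg) auto
      ultimately show "norm \<bar>q u\<bar> \<le> norm (\<Sum>i<N. \<bar>quantile (nus i) u\<bar>)" by simp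
    qed
  ultimately have "integrable UU (\<lambda>u. \<bar>q u\<bar>)" by (rule Bochner_Integration.integrable_bound)
  hence "integrable (distr UU borel q) (\<lambda>x. \<bar>x\<bar>)" using qm by (subst integrable_distr_eq) auto
  thus ?thesis using rd unfolding P1_def real_distribution_def real_distribution_axioms_def by auto
qed

definition q1 :: "real \<Rightarrow> real" where "q1 u = upmed N lam (\<lambda>i. quantile (nus i) u)"
definition q2 :: "real \<Rightarrow> real" where "q2 u = lowmed N lam (\<lambda>i. quantile (nus i) u)"

lemma q1_mono: "mono_on {0<..<1} q1"
  unfolding mono_on_def q1_def using us quantile_mono[OF rds]
  by (auto intro!: upmed_mono)

lemma q2_mono: "mono_on {0<..<1} q2"
  unfolding mono_on_def q2_def using us quantile_mono[OF rds]
  by (auto intro!: lowmed_mono)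

lemma q1_lc: "0 < t \<Longrightarrow> t < 1 \<Longrightarrow> (q1 \<longlongrightarrow> q1 t) (at_left t)"
  unfolding q1_def[abs_def] using us quantile_left_cont[OF rds]
  by (intro upmed_tendsto[where f="\<lambda>i u. quantile (nus i) u"]) auto

lemma q2_lc: "0 < t \<Longrightarrow> t < 1 \<Longrightarrow> (q2 \<longlongrightarrow> q2 t) (at_left t)"
  unfolding q2_def[abs_def] using us quantile_left_cont[OF rds]
  by (intro lowmed_tendsto[where f="\<lambda>i u. quantile (nus i) u"]) auto

definition rho1 where "rho1 = distr UU borel q1"
definition rho2 where "rho2 = distr UU borel q2"

lemma P1_rho1: "P1 rho1"
  unfolding rho1_def using q1_mono q1_lc upmed_in[OF us] by (intro P1_of_q) (auto simp: q1_def)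

lemma P1_rho2: "P1 rho2"
  unfolding rho2_def using q2_mono q2_lc lowmed_in[OF us] by (intro P1_of_q) (auto simp: q2_def)

lemma cdf_rho1: "cdf rho1 x = lowmed N lam (\<lambda>i. cdf (nus i) x)"
proof (rule eq_from_galois)
  show "0 \<le> cdf rho1 x" "cdf rho1 x \<le> 1" using P1_rd[OF P1_rho1] by (auto simp: rd_cdf_nonneg rd_cdf_le1)
  obtain j where "j < N" "lowmed N lam (\<lambda>i. cdf (nus i) x) = cdf (nus j) x" using lowmed_in[OF us] by blast
  thus "0 \<le> lowmed N lam (\<lambda>i. cdf (nus i) x)" "lowmed N lam (\<lambda>i. cdf (nus i) x) \<le> 1"
    using rds by (auto simp: rd_cdf_nonneg rd_cdf_le1)
  fix t :: real assume t: "0 < t" "t < 1"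
  have "t \<le> cdf rho1 x \<longleftrightarrow> q1 t \<le> x" unfolding rho1_def by (rule distr_mono_galois(2)[OF q1_mono q1_lc t])
  also have "\<dots> \<longleftrightarrow> (\<forall>I\<in>Ifam N lam. \<exists>i\<in>I. quantile (nus i) t \<le> x)" unfolding q1_def by (rule upmed_le_iff[OF us])
  also have "\<dots> \<longleftrightarrow> (\<forall>I\<in>Ifam N lam. \<exists>i\<in>I. t \<le> cdf (nus i) x)"
  proof -
    have "\<forall>i<N. (quantile (nus i) t \<le> x \<longleftrightarrow> t \<le> cdf (nus i) x)" using quantile_galois[OF rds] t by auto
    thus ?thesis using Ifam_mem by blast
  qed
  also have "\<dots> \<longleftrightarrow> t \<le> lowmed N lam (\<lambda>i. cdf (nus i) x)" by (rule lowmed_le_iff[OF us, symmetric])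
  finally show "t \<le> cdf rho1 x \<longleftrightarrow> t \<le> lowmed N lam (\<lambda>i. cdf (nus i) x)" .
qed

lemma quantile_rho2: "0 < t \<Longrightarrow> t < 1 \<Longrightarrow> quantile rho2 t = q2 t"
  unfolding rho2_def by (rule quantile_distr_q[OF q2_mono q2_lc])

end


context
  fixes N :: nat and lam :: "nat \<Rightarrow> real" and nus :: "nat \<Rightarrow> real measure"
  assumes us: "unit_simplex N lam" and P1s: "\<forall>i<N. P1 (nus i)"
begin

lemma Phi_cdf:
  assumes mu: "P1 mu"
  shows "integrable lborel (\<lambda>t. \<Sum>i<N. lam i * \<bar>cdf (nus i) t - cdf mu t\<bar>)"
    and "(\<Sum>i<N. lam i * W1 (nus i) mu) = (\<integral> t. (\<Sum>i<N. lam i * \<bar>cdf (nus i) t - cdf mu t\<bar>) \<partial>lborel)"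
proof -
  have int: "\<And>i. i \<in> {..<N} \<Longrightarrow> integrable lborel (\<lambda>t. lam i * \<bar>cdf (nus i) t - cdf mu t\<bar>)"
    using W1_cdf(1)[OF _ mu] P1s by auto
  thus "integrable lborel (\<lambda>t. \<Sum>i<N. lam i * \<bar>cdf (nus i) t - cdf mu t\<bar>)" by auto
  show "(\<Sum>i<N. lam i * W1 (nus i) mu) = (\<integral> t. (\<Sum>i<N. lam i * \<bar>cdf (nus i) t - cdf mu t\<bar>) \<partial>lborel)"
    using int W1_cdf(2)[OF _ mu] P1s by (subst Bochner_Integration.integral_sum) auto
qed

lemma Phi_q:
  assumes mu: "P1 mu"
  shows "integrable UU (\<lambda>t. \<Sum>i<N. lam i * \<bar>quantile (nus i) t - quantile mu t\<bar>)"
    and "(\<Sum>i<N. lam i * W1 (nus i) mu) = (\<integral> t. (\<Sum>i<N. lam i * \<bar>quantile (nus i) t - quantile mu t\<bar>) \<partial>UU)"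
proof -
  have int: "\<And>i. i \<in> {..<N} \<Longrightarrow> integrable UU (\<lambda>t. lam i * \<bar>quantile (nus i) t - quantile mu t\<bar>)"
    using W1_quantile(1)[OF _ mu] P1s by auto
  thus "integrable UU (\<lambda>t. \<Sum>i<N. lam i * \<bar>quantile (nus i) t - quantile mu t\<bar>)" by auto
  show "(\<Sum>i<N. lam i * W1 (nus i) mu) = (\<integral> t. (\<Sum>i<N. lam i * \<bar>quantile (nus i) t - quantile mu t\<bar>) \<partial>UU)"
    using int W1_quantile(2)[OF _ mu] P1s by (subst Bochner_Integration.integral_sum) auto
qed

lemma wmed_alt: "y \<in> wmedian N lam v \<longleftrightarrow> (\<forall>z. (\<Sum>i<N. lam i * \<bar>v i - y\<bar>) \<le> (\<Sum>i<N. lam i * \<bar>v i - z\<bar>))"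
  unfolding wmedian_def by (simp add: abs_minus_commute)

lemma cdf_char:
  assumes nu: "P1 nu"
  shows "nu \<in> WMed N lam nus \<longleftrightarrow> (\<forall>x. cdf nu x \<in> wmedian N lam (\<lambda>i. cdf (nus i) x))"
proof
  assume med: "\<forall>x. cdf nu x \<in> wmedian N lam (\<lambda>i. cdf (nus i) x)"
  show "nu \<in> WMed N lam nus"
    unfolding WMed_def
  proof (intro CollectI conjI allI impI)
    fix mu' assume mu': "P1 mu'"
    show "(\<Sum>i<N. lam i * W1 (nus i) nu) \<le> (\<Sum>i<N. lam i * W1 (nus i) mu')"
      unfolding Phi_cdf(2)[OF nu] Phi_cdf(2)[OF mu']
      using Phi_cdf(1)[OF nu] Phi_cdf(1)[OF mu'] 
    proof (rule integral_mono)
      fix t show "(\<Sum>i<N. lam i * \<bar>cdf (nus i) t - cdf nu t\<bar>) \<le> (\<Sum>i<N. lam i * \<bar>cdf (nus i) t - cdf mu' t\<bar>)"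
        using med unfolding wmed_alt by blast
    qed
  qed (rule nu)
next
  assume nuW: "nu \<in> WMed N lam nus"
  let ?r = "rho1 N lam nus"
  have Pr: "P1 ?r" by (rule P1_rho1[OF us P1s])
  define A where "A t = (\<Sum>i<N. lam i * \<bar>cdf (nus i) t - cdf nu t\<bar>)" for t
  define B where "B t = (\<Sum>i<N. lam i * \<bar>cdf (nus i) t - cdf ?r t\<bar>)" for t
  have le: "(\<Sum>i<N. lam i * W1 (nus i) nu) \<le> (\<Sum>i<N. lam i * W1 (nus i) ?r)"
    using nuW Pr unfolding WMed_def by blast
  have iA: "integrable lborel A" unfolding A_def by (rule Phi_cdf(1)[OF nu])
  have iB: "integrable lborel B" unfolding B_def by (rule Phi_cdf(1)[OF Pr])
  have BA: "B t \<le> A t" for t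
  proof -
    have "cdf ?r t \<in> wmedian N lam (\<lambda>i. cdf (nus i) t)"
      unfolding cdf_rho1[OF us P1s] by (rule lowmed_wmedian[OF us])
    thus ?thesis unfolding wmed_alt A_def B_def by blast
  qed
  have "(\<integral>t. A t - B t \<partial>lborel) = (\<integral>t. A t \<partial>lborel) - (\<integral>t. B t \<partial>lborel)"
    using iA iB by (rule Bochner_Integration.integral_diff)
  also have "\<dots> \<le> 0" using le unfolding Phi_cdf(2)[OF nu] Phi_cdf(2)[OF Pr] A_def B_def by simp
  finally have "(\<integral>t. A t - B t \<partial>lborel) \<le> 0" .
  moreover have "0 \<le> (\<integral>t. A t - B t \<partial>lborel)" using BA by (intro Bochner_Integration.integral_nonneg) auto
  ultimately have "(\<integral>t. A t - B t \<partial>lborel) = 0" by simp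
  hence ae: "AE t in lborel. A t - B t = 0"
    using iA iB BA by (subst (asm) integral_nonneg_eq_0_iff_AE) auto
  have rdn: "real_distribution nu" "real_distribution ?r" using nu Pr by (auto intro: P1_rd)
  have rds: "\<And>i. i < N \<Longrightarrow> real_distribution (nus i)" using P1s P1_rd by blast
  show "\<forall>x. cdf nu x \<in> wmedian N lam (\<lambda>i. cdf (nus i) x)"
  proof
    fix x
    have cont: "continuous (at_right x) (\<lambda>t. A t - B t)"
      unfolding A_def B_def
      using rd_cdf_rc[OF rdn(1)] rd_cdf_rc[OF rdn(2)] rd_cdf_rc[OF rds]
      by (intro continuous_intros) auto
    have "A x - B x = 0"
      using cont ae by (intro AE_right_cont_zero[of "\<lambda>t. A t - B t"]) (auto simp: continuous_within)
    hence "A x = B x" by simp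
    moreover have "cdf ?r x \<in> wmedian N lam (\<lambda>i. cdf (nus i) x)"
      unfolding cdf_rho1[OF us P1s] by (rule lowmed_wmedian[OF us])
    ultimately show "cdf nu x \<in> wmedian N lam (\<lambda>i. cdf (nus i) x)"
      unfolding wmed_alt A_def B_def by simp
  qed
qed

end


context
  fixes N :: nat and lam :: "nat \<Rightarrow> real" and nus :: "nat \<Rightarrow> real measure"
  assumes us: "unit_simplex N lam" and P1s: "\<forall>i<N. P1 (nus i)"
begin

lemma q_char:
  assumes nu: "P1 nu"
  shows "nu \<in> WMed N lam nus \<longleftrightarrow> (\<forall>t\<in>{0<..<1}. quantile nu t \<in> wmedian N lam (\<lambda>i. quantile (nus i) t))"
proof
  assume med: "\<forall>t\<in>{0<..<1}. quantile nu t \<in> wmedian N lam (\<lambda>i. quantile (nus i) t)"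
  show "nu \<in> WMed N lam nus"
    unfolding WMed_def
  proof (intro CollectI conjI allI impI)
    fix mu' assume mu': "P1 mu'"
    show "(\<Sum>i<N. lam i * W1 (nus i) nu) \<le> (\<Sum>i<N. lam i * W1 (nus i) mu')"
      unfolding Phi_q(2)[OF us P1s nu] Phi_q(2)[OF us P1s mu']
      using Phi_q(1)[OF us P1s nu] Phi_q(1)[OF us P1s mu']
    proof (rule integral_mono)
      fix t assume "t \<in> space UU"
      thus "(\<Sum>i<N. lam i * \<bar>quantile (nus i) t - quantile nu t\<bar>) \<le> (\<Sum>i<N. lam i * \<bar>quantile (nus i) t - quantile mu' t\<bar>)"
        using med unfolding wmed_alt[OF us P1s] by auto
    qed
  qed (rule nu)
next
  assume nuW: "nu \<in> WMed N lam nus"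
  let ?r = "rho2 N lam nus" and ?q = "q2 N lam nus"
  have Pr: "P1 ?r" by (rule P1_rho2[OF us P1s])
  define A where "A t = (\<Sum>i<N. lam i * \<bar>quantile (nus i) t - quantile nu t\<bar>)" for t
  define B where "B t = (\<Sum>i<N. lam i * \<bar>quantile (nus i) t - ?q t\<bar>)" for t
  have le: "(\<Sum>i<N. lam i * W1 (nus i) nu) \<le> (\<Sum>i<N. lam i * W1 (nus i) ?r)"
    using nuW Pr unfolding WMed_def by blast
  have Beq: "(\<integral>t. B t \<partial>UU) = (\<integral>t. (\<Sum>i<N. lam i * \<bar>quantile (nus i) t - quantile ?r t\<bar>) \<partial>UU)"
    unfolding B_def by (rule Bochner_Integration.integral_cong) (auto simp: quantile_rho2[OF us P1s])
  have iA: "integrable UU A" unfolding A_def by (rule Phi_q(1)[OF us P1s nu])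
  have iB: "integrable UU B"
  proof -
    have "integrable UU (\<lambda>t. \<Sum>i<N. lam i * \<bar>quantile (nus i) t - quantile ?r t\<bar>)" by (rule Phi_q(1)[OF us P1s Pr])
    moreover have "integrable UU (\<lambda>t. \<Sum>i<N. lam i * \<bar>quantile (nus i) t - quantile ?r t\<bar>) \<longleftrightarrow> integrable UU B"
      unfolding B_def by (rule Bochner_Integration.integrable_cong) (auto simp: quantile_rho2[OF us P1s])
    ultimately show ?thesis by simp
  qed
  have BA: "B t \<le> A t" for t
  proof -
    have "?q t \<in> wmedian N lam (\<lambda>i. quantile (nus i) t)"
      unfolding q2_def[OF us P1s] by (rule lowmed_wmedian[OF us])
    thus ?thesis unfolding wmed_alt[OF us P1s] A_def B_def by blast
  qed
  have "(\<integral>t. A t - B t \<partial>UU) = (\<integral>t. A t \<partial>UU) - (\<integral>t. B t \<partial>UU)"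
    using iA iB by (rule Bochner_Integration.integral_diff)
  also have "\<dots> \<le> 0" using le unfolding Phi_q(2)[OF us P1s nu] Phi_q(2)[OF us P1s Pr] Beq A_def by simp
  finally have "(\<integral>t. A t - B t \<partial>UU) \<le> 0" .
  moreover have "0 \<le> (\<integral>t. A t - B t \<partial>UU)" using BA by (intro Bochner_Integration.integral_nonneg) auto
  ultimately have "(\<integral>t. A t - B t \<partial>UU) = 0" by simp
  hence ae: "AE t in UU. A t - B t = 0"
    using iA iB BA by (subst (asm) integral_nonneg_eq_0_iff_AE) auto
  have rdn: "real_distribution nu" using nu by (auto intro: P1_rd)
  have rds: "\<And>i. i < N \<Longrightarrow> real_distribution (nus i)" using P1s P1_rd by blast
  show "\<forall>t\<in>{0<..<1}. quantile nu t \<in> wmedian N lam (\<lambda>i. quantile (nus i) t)"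
  proof
    fix x assume "x \<in> {0<..<1::real}"
    hence x: "0 < x" "x < 1" by auto
    have cont: "((\<lambda>t. A t - B t) \<longlongrightarrow> A x - B x) (at_left x)"
      unfolding A_def B_def
      using quantile_left_cont[OF rdn x] quantile_left_cont[OF rds x(1) x(2)] q2_lc[OF us P1s x]
      by (intro tendsto_intros) auto
    have "A x - B x = 0"
      using cont ae x by (intro AE_left_cont_zero_UU[of "\<lambda>t. A t - B t"]) auto
    hence "A x = B x" by simp
    moreover have "?q x \<in> wmedian N lam (\<lambda>i. quantile (nus i) x)"
      unfolding q2_def[OF us P1s] by (rule lowmed_wmedian[OF us])
    ultimately show "quantile nu x \<in> wmedian N lam (\<lambda>i. quantile (nus i) x)"
      unfolding wmed_alt[OF us P1s] A_def B_def by simp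
  qed
qed

lemma unique_med:
  assumes nohalf: "\<not> (\<exists>I\<subseteq>{..<N}. (\<Sum>i\<in>I. lam i) = 1/2)"
  shows "\<exists>!mu. mu \<in> WMed N lam nus"
proof (rule ex_ex1I)
  let ?r = "rho1 N lam nus"
  have Pr: "P1 ?r" by (rule P1_rho1[OF us P1s])
  show "\<exists>mu. mu \<in> WMed N lam nus"
  proof
    show "?r \<in> WMed N lam nus"
      unfolding cdf_char[OF us P1s Pr] cdf_rho1[OF us P1s] using lowmed_wmedian[OF us] by blast
  qed
next
  fix m1 m2 assume m1: "m1 \<in> WMed N lam nus" and m2: "m2 \<in> WMed N lam nus"
  have P: "P1 m1" "P1 m2" using m1 m2 by (auto simp: WMed_def)
  have "cdf m1 = cdf m2"
  proof
    fix x
    show "cdf m1 x = cdf m2 x"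
      using m1 m2 cdf_char[OF us P1s P(1)] cdf_char[OF us P1s P(2)]
      by (intro wmedian_unique[OF us nohalf]) auto
  qed
  thus "m1 = m2" using P by (intro cdf_unique) (auto intro: P1_rd)
qed

end

theorem proposition4p1:
  fixes N :: nat and lam :: "nat \<Rightarrow> real" and nus :: "nat \<Rightarrow> real measure" and nu :: "real measure"
  assumes "unit_simplex N lam"
    and "\<forall>i<N. P1 (nus i)"
    and "P1 nu"
  shows "(nu \<in> WMed N lam nus \<longleftrightarrow> (\<forall>x. cdf nu x \<in> wmedian N lam (\<lambda>i. cdf (nus i) x)))
       \<and> (nu \<in> WMed N lam nus \<longleftrightarrow>
            (\<forall>t\<in>{0<..<1}. quantile nu t \<in> wmedian N lam (\<lambda>i. quantile (nus i) t)))
       \<and> ((\<not> (\<exists>I\<subseteq>{..<N}. (\<Sum>i\<in>I. lam i) = 1/2)) \<longrightarrow> (\<exists>!mu. mu \<in> WMed N lam nus))"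
  using cdf_char[OF assms] q_char[OF assms] unique_med[OF assms(1,2)] by blast

end
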